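(* Let $F$ be a field and $R$ a Rota–Baxter operator of nonzero weight on $M_n(F)$ such that $R(1)$ is a diagonal matrix whose diagonal entries take exactly $k$ distinct values $\lambda_1,\dots,\lambda_k$, arranged in consecutive blocks: there are $0=s_0<s_1<\dots<s_k=n$ with the $(i,i)$ entry equal to $\lambda_j$ for $s_{j-1}+1\le i\le s_j$. Let $B_j=\mathrm{Span}\{e_{st}\mid s_{j-1}+1\le s,t\le s_j\}$ and $B=B_1\oplus\dots\oplus B_k$. Then $B$ is a subalgebra of $M_n(F)$ with $R(B)\subseteq B$. If $k=n$, then $R$ is diagonal.
   Context: $e_{st}$ denote matrix units. A linear operator $R$ on an algebra $A$ is a Rota–Baxter operator of weight $\lambda$ if $R(x)R(y)=R(R(x)y+xR(y)+\lambda xy)$ for all $x,y$. An RB-operator $R$ on $M_n(F)$ is called diagonal if there is $\psi\in\mathrm{Aut}(M_n(F))$ with $\psi^{-1}R\psi(D_n)\subseteq D_n$, where $D_n$ is the subalgebra of diagonal matrices. *)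

theory Defs
  imports "Jordan_Normal_Form.Matrix"
begin

text \<open>Matrices in M_n(F) are represented by Jordan_Normal_Form matrices in carrier_mat n n.
  Indices are 0-based: matrix unit e_{st} (1-based) has its entry at (s-1,t-1).\<close>

definition linear_op_mat :: "nat \<Rightarrow> ('a::field mat \<Rightarrow> 'a mat) \<Rightarrow> bool" where
  "linear_op_mat n R \<longleftrightarrow>
     (\<forall>x\<in>carrier_mat n n. R x \<in> carrier_mat n n) \<and>
     (\<forall>x\<in>carrier_mat n n. \<forall>y\<in>carrier_mat n n. R (x + y) = R x + R y) \<and>
     (\<forall>c. \<forall>x\<in>carrier_mat n n. R (c \<cdot>\<^sub>m x) = c \<cdot>\<^sub>m R x)"

definition RB_operator :: "nat \<Rightarrow> 'a::field \<Rightarrow> ('a mat \<Rightarrow> 'a mat) \<Rightarrow> bool" where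
  "RB_operator n lam R \<longleftrightarrow> linear_op_mat n R \<and>
     (\<forall>x\<in>carrier_mat n n. \<forall>y\<in>carrier_mat n n.
        R x * R y = R (R x * y + x * R y + lam \<cdot>\<^sub>m (x * y)))"

definition diag_mats :: "nat \<Rightarrow> 'a::field mat set" where
  "diag_mats n = {A \<in> carrier_mat n n. \<forall>i<n. \<forall>j<n. i \<noteq> j \<longrightarrow> A $$ (i,j) = 0}"

definition mat_alg_aut :: "nat \<Rightarrow> ('a::field mat \<Rightarrow> 'a mat) \<Rightarrow> bool" where
  "mat_alg_aut n \<psi> \<longleftrightarrow> linear_op_mat n \<psi> \<and>
     bij_betw \<psi> (carrier_mat n n) (carrier_mat n n) \<and>
     (\<forall>x\<in>carrier_mat n n. \<forall>y\<in>carrier_mat n n. \<psi> (x * y) = \<psi> x * \<psi> y) \<and>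
     \<psi> (1\<^sub>m n) = 1\<^sub>m n"

definition RB_diagonal :: "nat \<Rightarrow> ('a::field mat \<Rightarrow> 'a mat) \<Rightarrow> bool" where
  "RB_diagonal n R \<longleftrightarrow> (\<exists>\<psi>. mat_alg_aut n \<psi> \<and>
     (\<forall>x\<in>diag_mats n. inv_into (carrier_mat n n) \<psi> (R (\<psi> x)) \<in> diag_mats n))"

definition mat_subalgebra :: "nat \<Rightarrow> 'a::field mat set \<Rightarrow> bool" where
  "mat_subalgebra n S \<longleftrightarrow> S \<subseteq> carrier_mat n n \<and> 0\<^sub>m n n \<in> S \<and> 1\<^sub>m n \<in> S \<and>
     (\<forall>x\<in>S. \<forall>y\<in>S. x + y \<in> S \<and> x * y \<in> S) \<and> (\<forall>c. \<forall>x\<in>S. c \<cdot>\<^sub>m x \<in> S)"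

text \<open>B = B_1 + ... + B_k, where B_j = span of e_{st} with s,t in block j, i.e. (0-based)
  s_{j-1} \<le> s,t < s_j. Equivalently: matrices vanishing outside the diagonal blocks.\<close>
definition block_subspace :: "nat \<Rightarrow> nat \<Rightarrow> (nat \<Rightarrow> nat) \<Rightarrow> 'a::field mat set" where
  "block_subspace n k s = {A \<in> carrier_mat n n. \<forall>i<n. \<forall>j<n.
      \<not> (\<exists>b\<in>{1..k}. s (b-1) \<le> i \<and> i < s b \<and> s (b-1) \<le> j \<and> j < s b) \<longrightarrow> A $$ (i,j) = 0}"

end

theory Submission
  imports Defs
begin

lemma mult_entry:
  assumes "A \<in> carrier_mat n n" "B \<in> carrier_mat n n" "i < n" "j < n"
  shows "(A * B) $$ (i,j) = (\<Sum>l<n. A $$ (i,l) * B $$ (l,j))"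
  using assms by (auto simp: index_mult_mat scalar_prod_def row_def col_def atLeast0LessThan intro!: sum.cong)

lemma diag_left:
  assumes "D \<in> diag_mats n" "X \<in> carrier_mat n n" "i < n" "j < n"
  shows "(D * X) $$ (i,j) = D $$ (i,i) * X $$ (i,j)"
proof -
  have D: "D \<in> carrier_mat n n" using assms(1) by (simp add: diag_mats_def)
  have "(D * X) $$ (i,j) = (\<Sum>l<n. D $$ (i,l) * X $$ (l,j))" using mult_entry[OF D assms(2-4)] .
  also have "\<dots> = (\<Sum>l<n. if l = i then D $$ (i,i) * X $$ (i,j) else 0)"
    using assms(1) assms(3) by (intro sum.cong) (auto simp: diag_mats_def)
  also have "\<dots> = D $$ (i,i) * X $$ (i,j)" using assms(3) by simp
  finally show ?thesis .
qed

lemma diag_right: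
  assumes "D \<in> diag_mats n" "X \<in> carrier_mat n n" "i < n" "j < n"
  shows "(X * D) $$ (i,j) = X $$ (i,j) * D $$ (j,j)"
proof -
  have D: "D \<in> carrier_mat n n" using assms(1) by (simp add: diag_mats_def)
  have "(X * D) $$ (i,j) = (\<Sum>l<n. X $$ (i,l) * D $$ (l,j))" using mult_entry[OF assms(2) D assms(3,4)] .
  also have "\<dots> = (\<Sum>l<n. if l = j then X $$ (i,j) * D $$ (j,j) else 0)"
    using assms(1) assms(4) by (intro sum.cong) (auto simp: diag_mats_def)
  also have "\<dots> = X $$ (i,j) * D $$ (j,j)" using assms(4) by simp
  finally show ?thesis .
qed

lemma s_growth:
  assumes smono: "\<forall>j<k. s j < s (Suc j)"
  shows "j \<le> j' \<Longrightarrow> j' \<le> k \<Longrightarrow> s j + (j' - j) \<le> (s j' :: nat)"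
proof (induction j')
  case 0 then show ?case by simp
next
  case (Suc m)
  show ?case
  proof (cases "j = Suc m")
    case True then show ?thesis by simp
  next
    case False
    then have "j \<le> m" using Suc by simp
    then have "s j + (m - j) \<le> s m" using Suc by simp
    moreover have "s m < s (Suc m)" using smono Suc by simp
    ultimately show ?thesis using \<open>j \<le> m\<close> by simp
  qed
qed

lemma block_exists:
  assumes smono: "\<forall>j<k. s j < s (Suc j)" and s0: "s 0 = 0" and sk: "s k = n"
  shows "i < n \<Longrightarrow> \<exists>b\<in>{1..k}. s (b-1) \<le> i \<and> i < (s b :: nat)"
proof -
  assume i: "i < n"
  have "\<forall>m\<le>k. i < s m \<longrightarrow> (\<exists>b\<in>{1..m}. s (b-1) \<le> i \<and> i < s b)"
  proof (intro allI)
    fix m show "m \<le> k \<longrightarrow> i < s m \<longrightarrow> (\<exists>b\<in>{1..m}. s (b-1) \<le> i \<and> i < s b)"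
    proof (induction m)
      case 0 then show ?case using s0 by simp
    next
      case (Suc m)
      show ?case
      proof (intro impI)
        assume a: "Suc m \<le> k" "i < s (Suc m)"
        show "\<exists>b\<in>{1..Suc m}. s (b-1) \<le> i \<and> i < s b"
        proof (cases "i < s m")
          case True
          then obtain b where "b\<in>{1..m}" "s (b-1) \<le> i \<and> i < s b" using Suc a by auto
          then show ?thesis by (intro bexI[of _ b]) auto
        next
          case False
          then show ?thesis using a by (intro bexI[of _ "Suc m"]) auto
        qed
      qed
    qed
  qed
  then show ?thesis using i sk by auto
qed

lemma block_unique:
  assumes smono: "\<forall>j<k. s j < s (Suc j)"
    and b: "b \<in> {1..k}" "s (b-1) \<le> i" "i < (s b :: nat)"
    and b': "b' \<in> {1..k}" "s (b'-1) \<le> i" "i < s b'"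
  shows "b = b'"
proof (rule ccontr)
  assume "b \<noteq> b'"
  then consider "b < b'" | "b' < b" by linarith
  then show False
  proof cases
    case 1
    have "s b + (b'-1-b) \<le> s (b'-1)" using s_growth[OF smono, of b "b'-1"] 1 b' by simp
    then show False using b b' by simp
  next
    case 2
    have "s b' + (b-1-b') \<le> s (b-1)" using s_growth[OF smono, of b' "b-1"] 2 b by simp
    then show False using b b' by simp
  qed
qed

lemma block_subalg:
  fixes s :: "nat \<Rightarrow> nat"
  assumes smono: "\<forall>j<k. s j < s (Suc j)" and s0: "s 0 = 0" and sk: "s k = n"
  shows "mat_subalgebra n (block_subspace n k s :: 'a::field mat set)"
proof -
  define SB where "SB i j \<longleftrightarrow> (\<exists>b\<in>{1..k}. s (b-1) \<le> i \<and> i < s b \<and> s (b-1) \<le> j \<and> j < s b)" for i j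
  have Bdef: "(block_subspace n k s :: 'a mat set) = {A \<in> carrier_mat n n. \<forall>i<n. \<forall>j<n. \<not> SB i j \<longrightarrow> A $$ (i,j) = 0}"
    unfolding block_subspace_def SB_def by simp
  have blk: "\<And>i. i < n \<Longrightarrow> \<exists>b\<in>{1..k}. s (b-1) \<le> i \<and> i < s b"
    using block_exists[OF smono s0 sk] by blast
  have SB_refl: "\<And>i. i < n \<Longrightarrow> SB i i" using blk unfolding SB_def by blast
  have SB_trans: "\<And>i j l. SB i l \<Longrightarrow> SB l j \<Longrightarrow> SB i j"
  proof -
    fix i j l assume "SB i l" "SB l j"
    then obtain b b' where "b\<in>{1..k}" "s (b-1) \<le> i \<and> i < s b \<and> s (b-1) \<le> l \<and> l < s b"
      "b'\<in>{1..k}" "s (b'-1) \<le> l \<and> l < s b' \<and> s (b'-1) \<le> j \<and> j < s b'"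
      unfolding SB_def by blast
    moreover then have "b = b'" using block_unique[OF smono, of b l b'] by blast
    ultimately show "SB i j" unfolding SB_def by blast
  qed
  show "mat_subalgebra n (block_subspace n k s :: 'a mat set)"
    unfolding mat_subalgebra_def
  proof (intro conjI ballI allI)
    show "(block_subspace n k s :: 'a mat set) \<subseteq> carrier_mat n n" using Bdef by auto
    show "(0\<^sub>m n n :: 'a mat) \<in> block_subspace n k s" using Bdef by simp
    show "(1\<^sub>m n :: 'a mat) \<in> block_subspace n k s" using Bdef SB_refl by auto
    fix x y :: "'a mat" assume x: "x \<in> block_subspace n k s" and y: "y \<in> block_subspace n k s"
    have xc: "x \<in> carrier_mat n n" and yc: "y \<in> carrier_mat n n" using x y Bdef by auto
    show "x + y \<in> block_subspace n k s" using x y xc yc Bdef by auto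
    have "\<forall>i<n. \<forall>j<n. \<not> SB i j \<longrightarrow> (x * y) $$ (i,j) = 0"
    proof (intro allI impI)
      fix i j assume ij: "i < n" "j < n" "\<not> SB i j"
      have "(x * y) $$ (i,j) = (\<Sum>l<n. x $$ (i,l) * y $$ (l,j))" using mult_entry[OF xc yc ij(1,2)] .
      also have "\<dots> = 0"
      proof (intro sum.neutral ballI)
        fix l assume "l \<in> {..<n}"
        then have l: "l < n" by simp
        show "x $$ (i,l) * y $$ (l,j) = 0"
        proof (cases "SB i l")
          case True
          then have "\<not> SB l j" using ij SB_trans by blast
          then show ?thesis using y Bdef l ij by auto
        next
          case False then show ?thesis using x Bdef l ij by auto
        qed
      qed
      finally show "(x * y) $$ (i,j) = 0" .
    qed
    then show "x * y \<in> block_subspace n k s" using xc yc Bdef by auto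
  next
    fix c and x :: "'a mat" assume x: "x \<in> block_subspace n k s"
    then show "c \<cdot>\<^sub>m x \<in> block_subspace n k s" using Bdef by auto
  qed
qed

theorem proposition2:
  fixes n k :: nat and s :: "nat \<Rightarrow> nat" and lam :: "nat \<Rightarrow> 'a::field"
    and w :: 'a and R :: "'a mat \<Rightarrow> 'a mat"
  assumes RB: "RB_operator n w R" and w: "w \<noteq> 0"
    and s0: "s 0 = 0" and sk: "s k = n" and smono: "\<forall>j<k. s j < s (Suc j)"
    and lam_dist: "inj_on lam {1..k}"
    and R1_diag: "R (1\<^sub>m n) \<in> diag_mats n"
    and R1_blocks: "\<forall>j\<in>{1..k}. \<forall>i. s (j-1) \<le> i \<and> i < s j \<longrightarrow> R (1\<^sub>m n) $$ (i,i) = lam j"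
  shows "mat_subalgebra n (block_subspace n k s) \<and> R ` block_subspace n k s \<subseteq> block_subspace n k s
         \<and> (k = n \<longrightarrow> RB_diagonal n R)"
proof -
  define a where "a = R (1\<^sub>m n)"
  define SB where "SB i j \<longleftrightarrow> (\<exists>b\<in>{1..k}. s (b-1) \<le> i \<and> i < s b \<and> s (b-1) \<le> j \<and> j < s b)" for i j
  have Bdef: "(block_subspace n k s :: 'a mat set) = {A \<in> carrier_mat n n. \<forall>i<n. \<forall>j<n. \<not> SB i j \<longrightarrow> A $$ (i,j) = 0}"
    unfolding block_subspace_def SB_def by simp
  have lin: "linear_op_mat n R" using RB by (simp add: RB_operator_def)
  have Rc: "\<And>x. x \<in> carrier_mat n n \<Longrightarrow> R x \<in> carrier_mat n n" using lin by (simp add: linear_op_mat_def)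
  have rb: "\<And>x y. x \<in> carrier_mat n n \<Longrightarrow> y \<in> carrier_mat n n \<Longrightarrow>
        R x * R y = R (R x * y + x * R y + w \<cdot>\<^sub>m (x * y))" using RB by (simp add: RB_operator_def)
  have ac: "a \<in> carrier_mat n n" using R1_diag by (simp add: a_def diag_mats_def)
  have ad: "a \<in> diag_mats n" using R1_diag by (simp add: a_def)
  have blk: "\<And>i. i < n \<Longrightarrow> \<exists>b\<in>{1..k}. s (b-1) \<le> i \<and> i < s b"
    using block_exists[OF smono s0 sk] by blast
  have SB_refl: "\<And>i. i < n \<Longrightarrow> SB i i" using blk unfolding SB_def by blast
  have SB_trans: "\<And>i j l. SB i l \<Longrightarrow> SB l j \<Longrightarrow> SB i j"
  proof -
    fix i j l assume "SB i l" "SB l j"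
    then obtain b b' where "b\<in>{1..k}" "s (b-1) \<le> i \<and> i < s b \<and> s (b-1) \<le> l \<and> l < s b"
      "b'\<in>{1..k}" "s (b'-1) \<le> l \<and> l < s b' \<and> s (b'-1) \<le> j \<and> j < s b'"
      unfolding SB_def by blast
    moreover then have "b = b'" using block_unique[OF smono, of b l b'] by blast
    ultimately show "SB i j" unfolding SB_def by blast
  qed
  have SB_lam: "\<And>i j. i < n \<Longrightarrow> j < n \<Longrightarrow> \<not> SB i j \<Longrightarrow> a $$ (i,i) \<noteq> a $$ (j,j)"
  proof -
    fix i j assume ij: "i < n" "j < n" "\<not> SB i j"
    obtain b where b: "b\<in>{1..k}" "s (b-1) \<le> i \<and> i < s b" using blk ij by blast
    obtain b' where b': "b'\<in>{1..k}" "s (b'-1) \<le> j \<and> j < s b'" using blk ij by blast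
    have "b \<noteq> b'" using ij b b' unfolding SB_def by blast
    then have "lam b \<noteq> lam b'" using lam_dist b b' by (meson inj_on_def)
    moreover have "a $$ (i,i) = lam b" using R1_blocks b(1) b(2) unfolding a_def by blast
    moreover have "a $$ (j,j) = lam b'" using R1_blocks b'(1) b'(2) unfolding a_def by blast
    ultimately show "a $$ (i,i) \<noteq> a $$ (j,j)" by simp
  qed
  have SB_same: "\<And>i j. SB i j \<Longrightarrow> a $$ (i,i) = a $$ (j,j)"
  proof -
    fix i j assume "SB i j"
    then obtain b where b: "b\<in>{1..k}" "s (b-1) \<le> i \<and> i < s b \<and> s (b-1) \<le> j \<and> j < s b"
      unfolding SB_def by blast
    then show "a $$ (i,i) = a $$ (j,j)" using R1_blocks by (auto simp: a_def)
  qed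
  have comm_B: "\<And>X. X \<in> block_subspace n k s \<Longrightarrow> a * X = X * a"
  proof -
    fix X :: "'a mat" assume X: "X \<in> block_subspace n k s"
    have Xc: "X \<in> carrier_mat n n" using X Bdef by auto
    show "a * X = X * a"
    proof (rule eq_matI)
      fix i j assume ij: "i < dim_row (X * a)" "j < dim_col (X * a)"
      then have ij': "i < n" "j < n" using Xc ac by auto
      show "(a * X) $$ (i,j) = (X * a) $$ (i,j)"
      proof (cases "SB i j")
        case True
        then show ?thesis using diag_left[OF ad Xc ij'] diag_right[OF ad Xc ij'] SB_same[OF True]
          by (simp add: mult.commute)
      next
        case False
        then have "X $$ (i,j) = 0" using X Bdef ij' by auto
        then show ?thesis using diag_left[OF ad Xc ij'] diag_right[OF ad Xc ij'] by simp
      qed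
    qed (use Xc ac in auto)
  qed
  have comm_B': "\<And>X. X \<in> carrier_mat n n \<Longrightarrow> a * X = X * a \<Longrightarrow> X \<in> block_subspace n k s"
  proof -
    fix X :: "'a mat" assume Xc: "X \<in> carrier_mat n n" and c: "a * X = X * a"
    have "\<forall>i<n. \<forall>j<n. \<not> SB i j \<longrightarrow> X $$ (i,j) = 0"
    proof (intro allI impI)
      fix i j assume ij: "i < n" "j < n" "\<not> SB i j"
      have "(a * X) $$ (i,j) = (X * a) $$ (i,j)" using c by simp
      then have "a $$ (i,i) * X $$ (i,j) = X $$ (i,j) * a $$ (j,j)"
        unfolding diag_left[OF ad Xc ij(1,2)] diag_right[OF ad Xc ij(1,2)] .
      then have "(a $$ (i,i) - a $$ (j,j)) * X $$ (i,j) = 0" by (simp add: algebra_simps)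
      then show "X $$ (i,j) = 0" using SB_lam[OF ij] by simp
    qed
    then show "X \<in> block_subspace n k s" using Xc Bdef by simp
  qed
  have RB_inv: "R ` block_subspace n k s \<subseteq> block_subspace n k s"
  proof
    fix Y assume "Y \<in> R ` block_subspace n k s"
    then obtain X where X: "X \<in> block_subspace n k s" and Y: "Y = R X" by blast
    have Xc: "X \<in> carrier_mat n n" using X Bdef by auto
    have one: "1\<^sub>m n \<in> carrier_mat n n" by simp
    have e1: "a * R X = R (a * X + R X + w \<cdot>\<^sub>m X)"
      using rb[OF one Xc] Xc Rc[OF Xc] by (simp add: a_def)
    have e2: "R X * a = R (R X + X * a + w \<cdot>\<^sub>m X)"
      using rb[OF Xc one] Xc Rc[OF Xc] by (simp add: a_def)
    have "a * X + R X = R X + X * a" using comm_B[OF X] Rc[OF Xc] Xc ac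
      by (metis comm_add_mat mult_carrier_mat)
    then have "a * R X = R X * a" using e1 e2 by simp
    then show "Y \<in> block_subspace n k s" using comm_B'[OF Rc[OF Xc]] Y by simp
  qed
  have diag: "k = n \<longrightarrow> RB_diagonal n R"
  proof
    assume kn: "k = n"
    have sj: "\<And>j. j \<le> k \<Longrightarrow> s j = j"
    proof -
      fix j assume j: "j \<le> k"
      have "s 0 + (j - 0) \<le> s j" using s_growth[OF smono, of 0 j] j by simp
      moreover have "s j + (k - j) \<le> s k" using s_growth[OF smono, of j k] j by simp
      ultimately show "s j = j" using s0 sk kn j by simp
    qed
    have SB_eq: "\<And>i j. SB i j \<Longrightarrow> i = j"
    proof -
      fix i j assume "SB i j"
      then obtain b where b: "b\<in>{1..k}" "s (b-1) \<le> i \<and> i < s b \<and> s (b-1) \<le> j \<and> j < s b"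
        unfolding SB_def by blast
      then have "s (b-1) = b - 1" "s b = b" "1 \<le> b" using sj by auto
      then show "i = j" using b by (simp; linarith)
    qed
    have idaut: "mat_alg_aut n id"
      unfolding mat_alg_aut_def linear_op_mat_def by auto
    show "RB_diagonal n R"
      unfolding RB_diagonal_def
    proof (intro exI[of _ id] conjI ballI)
      show "mat_alg_aut n id" by (rule idaut)
      fix x :: "'a mat" assume x: "x \<in> diag_mats n"
      have xc: "x \<in> carrier_mat n n" using x by (simp add: diag_mats_def)
      have "\<forall>i<n. \<forall>j<n. \<not> SB i j \<longrightarrow> x $$ (i,j) = 0"
      proof (intro allI impI)
        fix i j assume ij: "i < n" "j < n" "\<not> SB i j"
        then have "i \<noteq> j" using SB_refl by blast
        then show "x $$ (i,j) = 0" using x ij unfolding diag_mats_def by simp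
      qed
      then have "x \<in> block_subspace n k s" using xc unfolding Bdef by simp
      then have Rx: "R x \<in> block_subspace n k s" using RB_inv by auto
      have Rxc: "R x \<in> carrier_mat n n" using Rc[OF xc] .
      have "inv_into (carrier_mat n n) id (R (id x)) = R x"
        using Rxc by (simp add: inv_into_f_eq)
      moreover have "R x \<in> diag_mats n"
      proof -
        have A: "\<forall>i<n. \<forall>j<n. \<not> SB i j \<longrightarrow> R x $$ (i,j) = 0" using Rx unfolding Bdef by simp
        have "\<forall>i<n. \<forall>j<n. i \<noteq> j \<longrightarrow> R x $$ (i,j) = 0"
        proof (intro allI impI)
          fix i j assume "i < n" "j < n" "i \<noteq> j"
          then have "\<not> SB i j" using SB_eq by blast
          then show "R x $$ (i,j) = 0" using A \<open>i < n\<close> \<open>j < n\<close> by blast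
        qed
        then show ?thesis using Rxc unfolding diag_mats_def by simp
      qed
      ultimately show "inv_into (carrier_mat n n) id (R (id x)) \<in> diag_mats n" by simp
    qed
  qed
  from block_subalg[OF smono s0 sk] RB_inv diag show ?thesis by (intro conjI)
qed

end
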